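(* Let $m\ge1$, $d\ge1$ and let $\mathcal{A}=\{A_0,\ldots,A_{m-1}\}$ be $d\times d$ real matrices with $\varrho(\mathcal{A})>0$. Let $V=\bigoplus_{i=0}^{2m-2}\mathbb{R}^d$, let $V_i\subseteq V$ be the subspace of vectors vanishing in every summand except possibly the $i$-th ($i=0,\ldots,2m-2$), and define linear maps $B_0,B_1\colon V\to V$ by \[B_0(v_0\oplus \cdots \oplus v_{2m-2}):=v_1 \oplus \cdots \oplus v_{2m-2} \oplus 0,\] \[B_1(v_0 \oplus \cdots \oplus v_{2m-2}):= 0 \oplus \cdots \oplus 0 \oplus A_0v_0 \oplus A_1v_1 \oplus \cdots \oplus A_{m-1}v_{m-1}\] (in the second formula the first $m-1$ summands are $0$, and $A_jv_j$ sits in summand $m-1+j$). Let $\mathcal{B}=\{B_0,B_1\}$ and let $x \in \Sigma_2^\omega$ be very weakly extremal for $\mathcal{B}$. Then there exists an integer $k \geq 0$ such that $y:=\sigma^kx$ is very weakly extremal for $\mathcal{B}$, and $B_{y_n}\cdots B_{y_1}V_{m-1} \neq \{0\}$ for every $n \geq 1$.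
   Context: $\Sigma_2=\{0,1\}$, $\Sigma_2^\omega$ is the set of infinite binary sequences $x=x_1x_2\cdots$, and $\sigma$ is the shift, $\sigma(x_1x_2x_3\cdots)=x_2x_3\cdots$. For a finite set $\mathcal{C}=\{C_0,\ldots,C_{r-1}\}$ of square real matrices (or linear maps of a Euclidean space), $\varrho(\mathcal{C})=\lim_{n\to\infty}\max\{\|C_{i_1}\cdots C_{i_n}\|^{1/n}\}$ is the joint spectral radius, with $\|\cdot\|$ the Euclidean operator norm (the summands of $V$ are mutually orthogonal). A sequence $x$ is very weakly extremal for $\mathcal{C}$ if $\limsup_{n\to\infty}\|C_{x_n}\cdots C_{x_1}\|^{1/n}=\varrho(\mathcal{C})$. *)

theory Defs
  imports "HOL-Analysis.Analysis"
begin

definition mat_opnorm :: "real^'d^'d \<Rightarrow> real" where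
  "mat_opnorm M = onorm (\<lambda>v. M *v v)"

definition mat_word_prod :: "(nat \<Rightarrow> real^'d^'d) \<Rightarrow> nat list \<Rightarrow> real^'d^'d" where
  "mat_word_prod A w = foldr (\<lambda>i M. A i ** M) w (mat 1)"

definition jsr_mat :: "nat \<Rightarrow> (nat \<Rightarrow> real^'d^'d) \<Rightarrow> real" where
  "jsr_mat m A = lim (\<lambda>n. Max ((\<lambda>w. root n (mat_opnorm (mat_word_prod A w)))
        ` {w. length w = n \<and> set w \<subseteq> {..<m}}))"

text \<open>Vectors of V are represented as functions nat => real^d vanishing outside {0..2m-2}.\<close>
definition Vsp :: "nat \<Rightarrow> (nat \<Rightarrow> real^'d) set" where
  "Vsp m = {v. \<forall>i. 2*m - 2 < i \<longrightarrow> v i = 0}"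

definition Vsub :: "nat \<Rightarrow> nat \<Rightarrow> (nat \<Rightarrow> real^'d) set" where
  "Vsub m i = {v \<in> Vsp m. \<forall>j. j \<noteq> i \<longrightarrow> v j = 0}"

definition Vnorm :: "nat \<Rightarrow> (nat \<Rightarrow> real^'d) \<Rightarrow> real" where
  "Vnorm m v = sqrt (\<Sum>i\<le>2*m-2. (norm (v i))\<^sup>2)"

definition Vopnorm :: "nat \<Rightarrow> ((nat \<Rightarrow> real^'d) \<Rightarrow> (nat \<Rightarrow> real^'d)) \<Rightarrow> real" where
  "Vopnorm m f = Sup ((\<lambda>v. Vnorm m (f v)) ` {v \<in> Vsp m. Vnorm m v \<le> 1})"

definition B0 :: "nat \<Rightarrow> (nat \<Rightarrow> real^'d) \<Rightarrow> (nat \<Rightarrow> real^'d)" where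
  "B0 m v = (\<lambda>i. if i < 2*m - 2 then v (i+1) else 0)"

definition B1 :: "nat \<Rightarrow> (nat \<Rightarrow> real^'d^'d) \<Rightarrow> (nat \<Rightarrow> real^'d) \<Rightarrow> (nat \<Rightarrow> real^'d)" where
  "B1 m A v = (\<lambda>i. if m - 1 \<le> i \<and> i \<le> 2*m - 2 then A (i - (m-1)) *v v (i - (m-1)) else 0)"

text \<open>B_b for a symbol b in Sigma_2 = {0,1}, encoded as bool (False = 0, True = 1).\<close>
definition Bmap :: "nat \<Rightarrow> (nat \<Rightarrow> real^'d^'d) \<Rightarrow> bool \<Rightarrow> (nat \<Rightarrow> real^'d) \<Rightarrow> (nat \<Rightarrow> real^'d)" where
  "Bmap m A b = (if b then B1 m A else B0 m)"

definition B_word_prod :: "nat \<Rightarrow> (nat \<Rightarrow> real^'d^'d) \<Rightarrow> bool list \<Rightarrow> (nat \<Rightarrow> real^'d) \<Rightarrow> (nat \<Rightarrow> real^'d)" where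
  "B_word_prod m A w = foldr (\<lambda>b f. Bmap m A b \<circ> f) w id"

definition jsr_B :: "nat \<Rightarrow> (nat \<Rightarrow> real^'d^'d) \<Rightarrow> real" where
  "jsr_B m A = lim (\<lambda>n. Max ((\<lambda>w. root n (Vopnorm m (B_word_prod m A w)))
        ` {w :: bool list. length w = n}))"

text \<open>x :: nat => bool, with x k the symbol x_{k+1}. seq_prod x n = B_{x_n} ... B_{x_1}.\<close>
fun seq_prod :: "nat \<Rightarrow> (nat \<Rightarrow> real^'d^'d) \<Rightarrow> (nat \<Rightarrow> bool) \<Rightarrow> nat \<Rightarrow> (nat \<Rightarrow> real^'d) \<Rightarrow> (nat \<Rightarrow> real^'d)" where
  "seq_prod m A x 0 = id"
| "seq_prod m A x (Suc n) = Bmap m A (x n) \<circ> seq_prod m A x n"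

definition shiftk :: "nat \<Rightarrow> (nat \<Rightarrow> bool) \<Rightarrow> (nat \<Rightarrow> bool)" where
  "shiftk k x = (\<lambda>i. x (i + k))"

definition very_weakly_extremal_B :: "nat \<Rightarrow> (nat \<Rightarrow> real^'d^'d) \<Rightarrow> (nat \<Rightarrow> bool) \<Rightarrow> bool" where
  "very_weakly_extremal_B m A x \<longleftrightarrow>
     limsup (\<lambda>n. ereal (root n (Vopnorm m (seq_prod m A x n)))) = ereal (jsr_B m A)"

end

theory Submission
  imports Defs
begin


lemma fekete_decomp:
  fixes M :: "nat \<Rightarrow> real"
  assumes nn: "\<And>n. 0 \<le> M n" and sub: "\<And>a b. a \<ge> 1 \<Longrightarrow> b \<ge> 1 \<Longrightarrow> M (a+b) \<le> M a * M b"
    and q: "q \<ge> 1" and r: "r \<ge> 1"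
  shows "M (s*q + r) \<le> M q ^ s * M r"
proof (induction s)
  case 0 then show ?case by simp
next
  case (Suc s)
  have "M (Suc s * q + r) = M (q + (s*q + r))" by (simp add: algebra_simps)
  also have "\<dots> \<le> M q * M (s*q+r)" using sub q r by simp
  also have "\<dots> \<le> M q * (M q ^ s * M r)" using Suc nn by (simp add: mult_left_mono)
  finally show ?case by (simp add: algebra_simps)
qed

lemma fekete:
  fixes M :: "nat \<Rightarrow> real"
  assumes nn: "\<And>n. 0 \<le> M n" and sub: "\<And>a b. a \<ge> 1 \<Longrightarrow> b \<ge> 1 \<Longrightarrow> M (a+b) \<le> M a * M b"
  defines "L \<equiv> Inf ((\<lambda>n. root n (M n)) ` {1..})"
  shows "(\<lambda>n. root n (M n)) \<longlonglongrightarrow> L" and "\<And>n. n \<ge> 1 \<Longrightarrow> L \<le> root n (M n)"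
proof -
  have bdd: "bdd_below ((\<lambda>n. root n (M n)) ` {1..})"
    by (rule bdd_belowI[of _ 0]) (auto simp: nn)
  show lb: "L \<le> root n (M n)" if "n \<ge> 1" for n
    unfolding L_def using that bdd by (intro cInf_lower) auto
  have L0: "0 \<le> L" unfolding L_def by (rule cInf_greatest) (auto simp: nn)
  show "(\<lambda>n. root n (M n)) \<longlonglongrightarrow> L"
  proof (rule order_tendstoI)
    fix a assume "a < L"
    then show "\<forall>\<^sub>F n in sequentially. a < root n (M n)"
    proof -
      have "\<forall>n\<ge>1. a < root n (M n)" using lb \<open>a < L\<close> less_le_trans by blast
      then show ?thesis unfolding eventually_sequentially by blast
    qed
  next
    fix a assume aL: "L < a"
    define c where "c = (L + a) / 2"
    have c: "L < c" "c < a" "0 < c" using aL L0 by (auto simp: c_def)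
    have "Inf ((\<lambda>n. root n (M n)) ` {1..}) < c" using c unfolding L_def by simp
    then obtain q where q: "q \<ge> 1" "root q (M q) < c"
      by (subst (asm) cInf_less_iff) (use bdd in auto)
    have Mq: "M q \<le> c ^ q"
    proof -
      have "M q = root q (M q) ^ q" using q nn by (simp add: real_root_pow_pos2)
      also have "\<dots> \<le> c ^ q" using q by (intro power_mono) (auto simp: nn)
      finally show ?thesis .
    qed
    define K where "K = (\<Sum>r\<in>{1..q}. M r / c ^ r) + 1"
    have K: "K > 0" unfolding K_def using c nn by (intro add_nonneg_pos sum_nonneg) auto
    have bound: "M n \<le> c ^ n * K" if n: "n \<ge> 1" for n
    proof -
      define s where "s = (n - 1) div q"
      define r where "r = (n - 1) mod q + 1"
      have r: "r \<ge> 1" "r \<le> q" using q by (auto simp: r_def Suc_le_eq)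
      have "(n-1) div q * q + (n-1) mod q = n-1" by (rule div_mult_mod_eq)
      then have nsr: "n = s * q + r" using n unfolding s_def r_def by linarith
      have "M n \<le> M q ^ s * M r" using fekete_decomp[OF nn sub q(1) r(1)] nsr by simp
      also have "\<dots> \<le> (c ^ q) ^ s * M r" using Mq nn by (intro mult_right_mono power_mono) auto
      also have "\<dots> = c ^ n * (M r / c ^ r)"
      proof -
        have "c ^ n = (c^q)^s * c^r" by (simp add: nsr power_add power_mult mult.commute)
        then show ?thesis using c by simp
      qed
      also have "\<dots> \<le> c ^ n * K"
      proof -
        have "M r / c ^ r \<le> (\<Sum>r\<in>{1..q}. M r / c ^ r)"
          using r c nn by (intro member_le_sum) auto
        then show ?thesis using c unfolding K_def by (intro mult_left_mono) auto
      qed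
      finally show ?thesis .
    qed
    have "(\<lambda>n. root n K) \<longlonglongrightarrow> 1" using K by (rule LIMSEQ_root_const)
    moreover have "1 < a / c" using c by simp
    ultimately have ev: "\<forall>\<^sub>F n in sequentially. root n K < a / c" by (rule order_tendstoD)
    show "\<forall>\<^sub>F n in sequentially. root n (M n) < a"
      using ev eventually_ge_at_top[of 1]
    proof eventually_elim
      case (elim n)
      have "root n (M n) \<le> root n (c ^ n * K)" using bound elim by (simp)
      also have "\<dots> = c * root n K" using elim c K by (simp add: real_root_mult real_root_power_cancel)
      also have "\<dots> < a" using elim c by (simp add: field_simps)
      finally show ?case .
    qed
  qed
qed



definition sb :: "nat \<Rightarrow> real^'d \<Rightarrow> nat \<Rightarrow> real^'d" where
  "sb i u = (\<lambda>j. if j = i then u else 0)"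

definition good :: "nat \<Rightarrow> ((nat \<Rightarrow> real^'d) \<Rightarrow> (nat \<Rightarrow> real^'d)) \<Rightarrow> bool" where
  "good m f \<longleftrightarrow> (\<forall>v\<in>Vsp m. f v \<in> Vsp m) \<and>
     (\<forall>v\<in>Vsp m. \<forall>w\<in>Vsp m. f (\<lambda>i. v i + w i) = (\<lambda>i. f v i + f w i)) \<and>
     (\<forall>c. \<forall>v\<in>Vsp m. f (\<lambda>i. c *\<^sub>R v i) = (\<lambda>i. c *\<^sub>R f v i)) \<and>
     (\<exists>C. \<forall>v\<in>Vsp m. Vnorm m (f v) \<le> C * Vnorm m v)"

lemma Vnorm_L2: "Vnorm m v = L2_set (\<lambda>i. norm (v i)) {..2*m-2}"
  by (simp add: Vnorm_def L2_set_def)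

lemma Vnorm_nonneg: "0 \<le> Vnorm m v" by (simp add: Vnorm_L2)

lemma Vnorm_comp: "i \<le> 2*m-2 \<Longrightarrow> norm (v i) \<le> Vnorm m v"
  unfolding Vnorm_L2 by (rule member_le_L2_set) auto

lemma Vnorm_le_sum: "Vnorm m v \<le> (\<Sum>i\<le>2*m-2. norm (v i))"
  unfolding Vnorm_L2 by (rule L2_set_le_sum) auto

lemma Vnorm_zero: "Vnorm m (\<lambda>_. 0) = 0" by (simp add: Vnorm_def)

lemma Vnorm_eq0: "v \<in> Vsp m \<Longrightarrow> Vnorm m v = 0 \<Longrightarrow> v = (\<lambda>_. 0)"
  unfolding Vnorm_L2 Vsp_def
  by (subst (asm) L2_set_eq_0_iff) (auto simp: fun_eq_iff not_le[symmetric])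

lemma Vnorm_scale: "Vnorm m (\<lambda>i. c *\<^sub>R v i) = \<bar>c\<bar> * Vnorm m v"
  unfolding Vnorm_L2 by (simp add: L2_set_right_distrib)

lemma Vnorm_sb: "i \<le> 2*m-2 \<Longrightarrow> Vnorm m (sb i u) = norm u"
proof -
  assume i: "i \<le> 2*m-2"
  have "(\<Sum>j\<le>2*m-2. (norm (sb i u j))\<^sup>2) = (\<Sum>j\<le>2*m-2. if j = i then (norm u)\<^sup>2 else 0)"
    by (rule sum.cong) (auto simp: sb_def)
  also have "\<dots> = (norm u)\<^sup>2" using i by simp
  finally show ?thesis by (simp add: Vnorm_def)
qed

lemma sb_Vsp: "i \<le> 2*m-2 \<Longrightarrow> sb i u \<in> Vsp m" by (auto simp: Vsp_def sb_def)
lemma sb_Vsub: "i \<le> 2*m-2 \<Longrightarrow> sb i u \<in> Vsub m i" by (auto simp: Vsub_def Vsp_def sb_def)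

lemma Vsp_zero: "(\<lambda>_. 0) \<in> Vsp m" by (simp add: Vsp_def)
lemma Vsp_add: "v \<in> Vsp m \<Longrightarrow> w \<in> Vsp m \<Longrightarrow> (\<lambda>i. v i + w i) \<in> Vsp m" by (simp add: Vsp_def)
lemma Vsp_scale: "v \<in> Vsp m \<Longrightarrow> (\<lambda>i. c *\<^sub>R v i) \<in> Vsp m" by (simp add: Vsp_def)

lemma good_Vsp: "good m f \<Longrightarrow> v \<in> Vsp m \<Longrightarrow> f v \<in> Vsp m" by (simp add: good_def)
lemma good_add: "good m f \<Longrightarrow> v \<in> Vsp m \<Longrightarrow> w \<in> Vsp m \<Longrightarrow> f (\<lambda>i. v i + w i) = (\<lambda>i. f v i + f w i)"
  by (simp add: good_def)
lemma good_scale: "good m f \<Longrightarrow> v \<in> Vsp m \<Longrightarrow> f (\<lambda>i. c *\<^sub>R v i) = (\<lambda>i. c *\<^sub>R f v i)"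
  by (simp add: good_def)

lemma good_zero: fixes f :: "(nat \<Rightarrow> real^'d) \<Rightarrow> (nat \<Rightarrow> real^'d)" shows "good m f \<Longrightarrow> f (\<lambda>_. 0) = (\<lambda>_. 0)"
proof -
  assume g: "good m f"
  have "f (\<lambda>i. 0 *\<^sub>R (\<lambda>_. 0::real^'d) i) = (\<lambda>i. 0 *\<^sub>R f (\<lambda>_. 0) i)"
    by (rule good_scale[OF g Vsp_zero])
  then show ?thesis by simp
qed

lemma Vopnorm_bdd: "good m f \<Longrightarrow> bdd_above ((\<lambda>v. Vnorm m (f v)) ` {v \<in> Vsp m. Vnorm m v \<le> 1})"
proof -
  assume g: "good m f"
  then obtain C where C: "\<forall>v\<in>Vsp m. Vnorm m (f v) \<le> C * Vnorm m v" by (auto simp: good_def)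
  show ?thesis
  proof (rule bdd_aboveI[of _ "max C 0"])
    fix y assume "y \<in> (\<lambda>v. Vnorm m (f v)) ` {v \<in> Vsp m. Vnorm m v \<le> 1}"
    then obtain v where v: "v \<in> Vsp m" "Vnorm m v \<le> 1" "y = Vnorm m (f v)" by auto
    have "C * Vnorm m v \<le> max C 0 * Vnorm m v"
      using v Vnorm_nonneg[of m v] by (intro mult_right_mono) auto
    also have "\<dots> \<le> max C 0 * 1" using v by (intro mult_left_mono) auto
    moreover have "Vnorm m (f v) \<le> C * Vnorm m v" using C v(1) by blast
    ultimately show "y \<le> max C 0" using v(3) by linarith
  qed
qed

lemma Vopnorm_ub: "good m f \<Longrightarrow> v \<in> Vsp m \<Longrightarrow> Vnorm m v \<le> 1 \<Longrightarrow> Vnorm m (f v) \<le> Vopnorm m f"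
  unfolding Vopnorm_def by (rule cSup_upper) (auto dest: Vopnorm_bdd)

lemma Vopnorm_nonneg: "good m f \<Longrightarrow> 0 \<le> Vopnorm m f"
proof -
  assume g: "good m f"
  have "Vnorm m (f (\<lambda>_. 0)) \<le> Vopnorm m f"
    by (rule Vopnorm_ub[OF g Vsp_zero]) (simp add: Vnorm_zero)
  then show ?thesis using Vnorm_nonneg[of m "f (\<lambda>_. 0)"] by linarith
qed

lemma Vopnorm_bound: "good m f \<Longrightarrow> v \<in> Vsp m \<Longrightarrow> Vnorm m (f v) \<le> Vopnorm m f * Vnorm m v"
proof -
  assume g: "good m f" and v: "v \<in> Vsp m"
  show ?thesis
  proof (cases "Vnorm m v = 0")
    case True
    then have "v = (\<lambda>_. 0)" using Vnorm_eq0 v by blast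
    then show ?thesis using good_zero[OF g] by (simp add: Vnorm_zero)
  next
    case False
    define t where "t = Vnorm m v"
    have t: "t > 0" using False Vnorm_nonneg[of m v] by (simp add: t_def)
    define w where "w = (\<lambda>i. (1/t) *\<^sub>R v i)"
    have w: "w \<in> Vsp m" "Vnorm m w = 1" using v t by (auto simp: w_def Vsp_scale Vnorm_scale t_def)
    have "Vnorm m (f w) = (1/t) * Vnorm m (f v)" using good_scale[OF g v] t
      by (simp add: w_def Vnorm_scale)
    moreover have "Vnorm m (f w) \<le> Vopnorm m f" using Vopnorm_ub[OF g w(1)] w by simp
    ultimately show ?thesis using t by (simp add: t_def field_simps)
  qed
qed

lemma Vopnorm_least: "good m f \<Longrightarrow> 0 \<le> C \<Longrightarrow> (\<And>v. v \<in> Vsp m \<Longrightarrow> Vnorm m (f v) \<le> C * Vnorm m v) \<Longrightarrow> Vopnorm m f \<le> C"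
  unfolding Vopnorm_def
proof (rule cSup_least)
  show "(\<lambda>v. Vnorm m (f v)) ` {v \<in> Vsp m. Vnorm m v \<le> 1} \<noteq> {}"
  proof -
    have "(\<lambda>_. 0) \<in> {v \<in> Vsp m. Vnorm m v \<le> 1}" by (simp add: Vsp_def Vnorm_def)
    then show ?thesis by blast
  qed
next
  fix y assume "0 \<le> C" "(\<And>v. v \<in> Vsp m \<Longrightarrow> Vnorm m (f v) \<le> C * Vnorm m v)" "y \<in> (\<lambda>v. Vnorm m (f v)) ` {v \<in> Vsp m. Vnorm m v \<le> 1}"
  then obtain v where v: "v \<in> Vsp m" "Vnorm m v \<le> 1" "y = Vnorm m (f v)" and C: "0 \<le> C"
    and b: "Vnorm m (f v) \<le> C * Vnorm m v" by auto
  have "C * Vnorm m v \<le> C * 1" using v C by (intro mult_left_mono) auto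
  then show "y \<le> C" using b v by simp
qed

lemma good_comp: fixes f g :: "(nat \<Rightarrow> real^'d) \<Rightarrow> (nat \<Rightarrow> real^'d)" shows "good m f \<Longrightarrow> good m g \<Longrightarrow> good m (g \<circ> f)"
  unfolding good_def[of m "g \<circ> f"]
proof (intro conjI ballI allI)
  assume f: "good m f" and g: "good m g"
  fix v w :: "nat \<Rightarrow> real^'d" assume v: "v \<in> Vsp m" and w: "w \<in> Vsp m"
  show "(g \<circ> f) (\<lambda>i. v i + w i) = (\<lambda>i. (g \<circ> f) v i + (g \<circ> f) w i)"
    using good_add[OF f v w] good_add[OF g good_Vsp[OF f v] good_Vsp[OF f w]] by simp
next
  fix c :: real and v :: "nat \<Rightarrow> real^'d" assume f: "good m f" and g: "good m g" and v: "v \<in> Vsp m"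
  show "(g \<circ> f) (\<lambda>i. c *\<^sub>R v i) = (\<lambda>i. c *\<^sub>R (g \<circ> f) v i)"
    using good_scale[OF f v] good_scale[OF g good_Vsp[OF f v]] by simp
next
  fix v :: "nat \<Rightarrow> real^'d" assume f: "good m f" and g: "good m g" and v: "v \<in> Vsp m"
  show "(g \<circ> f) v \<in> Vsp m" using good_Vsp[OF g good_Vsp[OF f v]] by simp
next
  assume f: "good m f" and g: "good m g"
  show "\<exists>C. \<forall>v\<in>Vsp m. Vnorm m ((g \<circ> f) v) \<le> C * Vnorm m v"
  proof (intro exI ballI)
    fix v :: "nat \<Rightarrow> real^'d" assume v: "v \<in> Vsp m"
    have "Vnorm m (g (f v)) \<le> Vopnorm m g * Vnorm m (f v)" using Vopnorm_bound[OF g good_Vsp[OF f v]] .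
    also have "\<dots> \<le> Vopnorm m g * (Vopnorm m f * Vnorm m v)"
      using Vopnorm_bound[OF f v] Vopnorm_nonneg[OF g] by (intro mult_left_mono)
    finally show "Vnorm m ((g \<circ> f) v) \<le> (Vopnorm m g * Vopnorm m f) * Vnorm m v" by (simp add: mult.assoc)
  qed
qed

lemma Vopnorm_comp: fixes f g :: "(nat \<Rightarrow> real^'d) \<Rightarrow> (nat \<Rightarrow> real^'d)" shows "good m f \<Longrightarrow> good m g \<Longrightarrow> Vopnorm m (g \<circ> f) \<le> Vopnorm m g * Vopnorm m f"
proof (rule Vopnorm_least[OF good_comp])
  assume f: "good m f" and g: "good m g"
  show "0 \<le> Vopnorm m g * Vopnorm m f" using Vopnorm_nonneg[OF f] Vopnorm_nonneg[OF g] by simp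
  fix v :: "nat \<Rightarrow> real^'d" assume v: "v \<in> Vsp m"
  have "Vnorm m (g (f v)) \<le> Vopnorm m g * Vnorm m (f v)" using Vopnorm_bound[OF g good_Vsp[OF f v]] .
  also have "\<dots> \<le> Vopnorm m g * (Vopnorm m f * Vnorm m v)"
    using Vopnorm_bound[OF f v] Vopnorm_nonneg[OF g] by (intro mult_left_mono)
  finally show "Vnorm m ((g \<circ> f) v) \<le> (Vopnorm m g * Vopnorm m f) * Vnorm m v" by (simp add: mult.assoc)
qed

lemma good_id: "good m id"
  unfolding good_def by (auto intro!: exI[of _ 1])

lemma Vnorm_bound_comp: fixes w :: "nat \<Rightarrow> real^'d" shows "(\<And>i. i \<le> 2*m-2 \<Longrightarrow> norm (w i) \<le> K) \<Longrightarrow> Vnorm m w \<le> real (Suc (2*m-2)) * K"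
proof -
  assume h: "\<And>i. i \<le> 2*m-2 \<Longrightarrow> norm (w i) \<le> K"
  have "Vnorm m w \<le> (\<Sum>i\<le>2*m-2. norm (w i))" by (rule Vnorm_le_sum)
  also have "\<dots> \<le> (\<Sum>i\<le>2*m-2. K)" using h by (intro sum_mono) auto
  also have "\<dots> = real (Suc (2*m-2)) * K" by simp
  finally show ?thesis .
qed



lemma mat_opnorm_bound: "norm (M *v u) \<le> mat_opnorm M * norm u"
  unfolding mat_opnorm_def using onorm[OF matrix_vector_mul_bounded_linear[of M]] by simp

lemma mat_opnorm_nonneg: "0 \<le> mat_opnorm M"
  unfolding mat_opnorm_def using onorm_pos_le[OF matrix_vector_mul_bounded_linear[of M]] by simp

lemma good_B0: "good m (B0 m)"
  unfolding good_def
proof (intro conjI ballI allI)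
  fix v :: "nat \<Rightarrow> real^'d" assume v: "v \<in> Vsp m"
  show "B0 m v \<in> Vsp m" by (simp add: B0_def Vsp_def)
next
  fix v w :: "nat \<Rightarrow> real^'d"
  show "B0 m (\<lambda>i. v i + w i) = (\<lambda>i. B0 m v i + B0 m w i)" by (simp add: B0_def fun_eq_iff)
next
  fix c :: real and v :: "nat \<Rightarrow> real^'d"
  show "B0 m (\<lambda>i. c *\<^sub>R v i) = (\<lambda>i. c *\<^sub>R B0 m v i)" by (simp add: B0_def fun_eq_iff)
next
  show "\<exists>C. \<forall>v\<in>Vsp m. Vnorm m (B0 m v :: nat \<Rightarrow> real^'d) \<le> C * Vnorm m v"
  proof (intro exI ballI)
    fix v :: "nat \<Rightarrow> real^'d" assume v: "v \<in> Vsp m"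
    have "Vnorm m (B0 m v) \<le> real (Suc (2*m-2)) * Vnorm m v"
    proof (rule Vnorm_bound_comp)
      fix i assume i: "i \<le> 2*m-2"
      show "norm (B0 m v i) \<le> Vnorm m v"
        using Vnorm_comp[of "i+1" m v] Vnorm_nonneg[of m v] by (auto simp: B0_def)
    qed
    then show "Vnorm m (B0 m v) \<le> real (Suc (2*m-2)) * Vnorm m v" .
  qed
qed

lemma good_B1: fixes A :: "nat \<Rightarrow> real^'d^'d" shows "good m (B1 m A)"
  unfolding good_def
proof (intro conjI ballI allI)
  fix v :: "nat \<Rightarrow> real^'d" assume v: "v \<in> Vsp m"
  show "B1 m A v \<in> Vsp m" by (simp add: B1_def Vsp_def)
next
  fix v w :: "nat \<Rightarrow> real^'d"
  show "B1 m A (\<lambda>i. v i + w i) = (\<lambda>i. B1 m A v i + B1 m A w i)"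
    by (simp add: B1_def fun_eq_iff matrix_vector_right_distrib)
next
  fix c :: real and v :: "nat \<Rightarrow> real^'d"
  show "B1 m A (\<lambda>i. c *\<^sub>R v i) = (\<lambda>i. c *\<^sub>R B1 m A v i)"
    by (simp add: B1_def fun_eq_iff matrix_vector_mult_scaleR)
next
  define K where "K = (\<Sum>j<Suc m. mat_opnorm (A j))"
  have K: "mat_opnorm (A j) \<le> K" if "j \<le> m" for j
    unfolding K_def using that mat_opnorm_nonneg by (intro member_le_sum) auto
  show "\<exists>C. \<forall>v\<in>Vsp m. Vnorm m (B1 m A v) \<le> C * Vnorm m v"
  proof (intro exI ballI)
    fix v :: "nat \<Rightarrow> real^'d" assume v: "v \<in> Vsp m"
    have "Vnorm m (B1 m A v) \<le> real (Suc (2*m-2)) * (K * Vnorm m v)"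
    proof (rule Vnorm_bound_comp)
      fix i assume i: "i \<le> 2*m-2"
      show "norm (B1 m A v i) \<le> K * Vnorm m v"
      proof (cases "m - 1 \<le> i \<and> i \<le> 2*m - 2")
        case True
        define j where "j = i - (m-1)"
        have j: "j \<le> m" "j \<le> 2*m-2 \<or> v j = 0"
          using True v by (auto simp: j_def Vsp_def)
        have "norm (B1 m A v i) = norm (A j *v v j)" using True by (simp add: B1_def j_def)
        also have "\<dots> \<le> mat_opnorm (A j) * norm (v j)" by (rule mat_opnorm_bound)
        also have "\<dots> \<le> K * Vnorm m v"
          using j K[of j] Vnorm_comp[of j m v] mat_opnorm_nonneg[of "A j"] Vnorm_nonneg[of m v]
          by (auto intro!: mult_mono)
        finally show ?thesis .
      next
        case False
        have "0 \<le> K * Vnorm m v"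
          using K[of 0] mat_opnorm_nonneg[of "A 0"] Vnorm_nonneg[of m v] by simp
        moreover have "B1 m A v i = 0" using False unfolding B1_def by presburger
        ultimately show ?thesis by simp
      qed
    qed
    then show "Vnorm m (B1 m A v) \<le> (real (Suc (2*m-2)) * K) * Vnorm m v" by (simp add: mult.assoc)
  qed
qed

lemma good_Bmap: "good m (Bmap m A b)"
  by (simp add: Bmap_def good_B0 good_B1)

lemma Bw_Nil: "B_word_prod m A [] = id" by (simp add: B_word_prod_def)
lemma Bw_Cons: "B_word_prod m A (b # w) = Bmap m A b \<circ> B_word_prod m A w" by (simp add: B_word_prod_def)

lemma good_Bw: "good m (B_word_prod m A w)"
proof (induction w)
  case Nil show ?case by (simp only: Bw_Nil good_id)
next
  case (Cons b w) show ?case by (simp only: Bw_Cons) (rule good_comp[OF Cons good_Bmap])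
qed

lemma good_seq: "good m (seq_prod m A x n)"
proof (induction n)
  case 0 show ?case by (simp only: seq_prod.simps good_id)
next
  case (Suc n) show ?case by (simp only: seq_prod.simps) (rule good_comp[OF Suc good_Bmap])
qed

lemma Bw_append: "B_word_prod m A (u @ w) = B_word_prod m A u \<circ> B_word_prod m A w"
  by (induction u) (simp_all add: B_word_prod_def)

lemma seq_Bw: "seq_prod m A y n = B_word_prod m A (rev (map y [0..<n]))"
  by (induction n) (simp_all add: B_word_prod_def Bw_append)

lemma seq_shift: "seq_prod m A x (n + k) = seq_prod m A (shiftk k x) n \<circ> seq_prod m A x k"
  by (induction n) (simp_all add: shiftk_def add.commute)

lemma B0_Vsub: "v \<in> Vsub m i \<Longrightarrow> B0 m v \<in> Vsub m (i - 1)"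
  by (auto simp: Vsub_def Vsp_def B0_def)

lemma B0_V0: "v \<in> Vsub m 0 \<Longrightarrow> B0 m v = (\<lambda>_. 0)"
  by (auto simp: Vsub_def Vsp_def B0_def fun_eq_iff)

lemma B1_Vsub: "v \<in> Vsub m i \<Longrightarrow> B1 m A v \<in> Vsub m (i + (m - 1))"
  by (auto simp: Vsub_def Vsp_def B1_def)

lemma B1_big: "m \<ge> 1 \<Longrightarrow> v \<in> Vsub m i \<Longrightarrow> m \<le> i \<Longrightarrow> B1 m A v = (\<lambda>_. 0)"
  unfolding fun_eq_iff B1_def
proof (intro allI)
  fix x assume m: "m \<ge> 1" and v: "v \<in> Vsub m i" and i: "m \<le> i"
  show "(if m - 1 \<le> x \<and> x \<le> 2 * m - 2 then A (x - (m - 1)) *v v (x - (m - 1)) else 0) = 0"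
  proof (cases "m - 1 \<le> x \<and> x \<le> 2 * m - 2")
    case True
    then have "x - (m-1) \<noteq> i" using i m by linarith
    then have "v (x - (m-1)) = 0" using v by (auto simp: Vsub_def)
    then show ?thesis by simp
  next
    case False then show ?thesis by presburger
  qed
qed

lemma Vsub_nz: "v \<in> Vsub m i \<Longrightarrow> v \<noteq> (\<lambda>_. 0) \<Longrightarrow> i \<le> 2*m-2"
  by (auto simp: Vsub_def Vsp_def fun_eq_iff) (metis not_le)

lemma B0_sb: "1 \<le> i \<Longrightarrow> i \<le> 2*m-2 \<Longrightarrow> B0 m (sb i u) = sb (i - 1) u"
  by (auto simp: B0_def sb_def fun_eq_iff)

lemma B1_sb: "j \<le> m - 1 \<Longrightarrow> B1 m A (sb j u) = sb (j + (m-1)) (A j *v u)"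
  by (auto simp: B1_def sb_def fun_eq_iff)

lemma B0_pow_sb: "r \<le> i \<Longrightarrow> i \<le> 2*m-2 \<Longrightarrow> (B0 m ^^ r) (sb i u) = sb (i - r) u"
  by (induction r) (simp_all add: B0_sb)

lemma Bw_rep0: "B_word_prod m A (replicate r False) = B0 m ^^ r"
  by (induction r) (simp_all add: B_word_prod_def Bmap_def funpow_Suc_right[symmetric])



definition MB :: "nat \<Rightarrow> (nat \<Rightarrow> real^'d^'d) \<Rightarrow> nat \<Rightarrow> real" where
  "MB m A n = Max ((\<lambda>w. Vopnorm m (B_word_prod m A w)) ` {w::bool list. length w = n})"

definition MA :: "nat \<Rightarrow> (nat \<Rightarrow> real^'d^'d) \<Rightarrow> nat \<Rightarrow> real" where
  "MA m A n = Max ((\<lambda>w. mat_opnorm (mat_word_prod A w)) ` {w. length w = n \<and> set w \<subseteq> {..<m}})"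

lemma finB: "finite {w::bool list. length w = n}"
  using finite_lists_length_eq[of "UNIV::bool set" n] by simp

lemma finA: "finite {w::nat list. length w = n \<and> set w \<subseteq> {..<m}}"
  using finite_lists_length_eq[of "{..<m}" n] by (simp add: conj_commute)

lemma MB_ge: "length w = n \<Longrightarrow> Vopnorm m (B_word_prod m A w) \<le> MB m A n"
  unfolding MB_def by (rule Max_ge) (auto intro: finite_imageI[OF finB])

lemma MB_nonneg: "0 \<le> MB m A n"
  using MB_ge[of "replicate n False" n m A] Vopnorm_nonneg[OF good_Bw[of m A "replicate n False"]] by simp

lemma MB_sub: "MB m A (a + b) \<le> MB m A a * MB m A b"
  unfolding MB_def[of m A "a+b"]
proof (rule Max.boundedI)
  show "finite ((\<lambda>w. Vopnorm m (B_word_prod m A w)) ` {w::bool list. length w = a + b})"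
    by (intro finite_imageI finB)
  show "(\<lambda>w. Vopnorm m (B_word_prod m A w)) ` {w::bool list. length w = a + b} \<noteq> {}"
    using length_replicate[of "a+b" False] by blast
next
  fix y assume "y \<in> (\<lambda>w. Vopnorm m (B_word_prod m A w)) ` {w::bool list. length w = a + b}"
  then obtain w :: "bool list" where w: "length w = a + b" "y = Vopnorm m (B_word_prod m A w)" by auto
  have "B_word_prod m A w = B_word_prod m A (take a w) \<circ> B_word_prod m A (drop a w)"
    by (simp add: Bw_append[symmetric])
  then have "y \<le> Vopnorm m (B_word_prod m A (take a w)) * Vopnorm m (B_word_prod m A (drop a w))"
    using w Vopnorm_comp[OF good_Bw good_Bw] by simp
  also have "\<dots> \<le> MB m A a * MB m A b"
    using w by (intro mult_mono MB_ge Vopnorm_nonneg good_Bw MB_nonneg) auto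
  finally show "y \<le> MB m A a * MB m A b" .
qed

lemma mono_root: "mono (root n)"
  by (cases "n = 0") (auto simp: mono_def intro: real_root_le_mono)

lemma jsr_B_eq: "jsr_B m A = lim (\<lambda>n. root n (MB m A n))"
proof -
  have "Max ((\<lambda>w. root n (Vopnorm m (B_word_prod m A w))) ` {w::bool list. length w = n}) = root n (MB m A n)" for n
  proof -
    have ne: "(\<lambda>w. Vopnorm m (B_word_prod m A w)) ` {w::bool list. length w = n} \<noteq> {}"
      using length_replicate[of n False] by blast
    show ?thesis unfolding MB_def
      by (subst mono_Max_commute[OF mono_root finite_imageI[OF finB] ne]) (simp add: image_image)
  qed
  then show ?thesis unfolding jsr_B_def by simp
qed

lemma mat_word_prod_append: "mat_word_prod A (u @ w) = mat_word_prod A u ** mat_word_prod A w"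
  by (induction u) (simp_all add: mat_word_prod_def matrix_mul_assoc)

lemma mat_opnorm_mult: "mat_opnorm (X ** Y) \<le> mat_opnorm X * mat_opnorm Y"
proof -
  have "(\<lambda>v. (X ** Y) *v v) = (\<lambda>v. X *v v) \<circ> (\<lambda>v. Y *v v)"
    by (simp add: fun_eq_iff matrix_vector_mul_assoc)
  then show ?thesis unfolding mat_opnorm_def
    using onorm_compose[OF matrix_vector_mul_bounded_linear matrix_vector_mul_bounded_linear, of X Y] by simp
qed

lemma MA_ge: "length w = n \<Longrightarrow> set w \<subseteq> {..<m} \<Longrightarrow> mat_opnorm (mat_word_prod A w) \<le> MA m A n"
  unfolding MA_def by (rule Max_ge) (auto intro: finite_imageI[OF finA])

lemma MA_nonneg: "m \<ge> 1 \<Longrightarrow> 0 \<le> MA m A n"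
proof -
  assume m: "m \<ge> 1"
  have "set (replicate n (0::nat)) \<subseteq> {..<m}" using m by auto
  then show ?thesis
    using MA_ge[of "replicate n 0" n m A] mat_opnorm_nonneg[of "mat_word_prod A (replicate n 0)"] by simp
qed

lemma MA_sub: assumes m: "m \<ge> 1" shows "MA m A (a + b) \<le> MA m A a * MA m A b"
  unfolding MA_def[of m A "a+b"]
proof (rule Max.boundedI)
  show "finite ((\<lambda>w. mat_opnorm (mat_word_prod A w)) ` {w. length w = a + b \<and> set w \<subseteq> {..<m}})"
    by (intro finite_imageI finA)
  have "replicate (a+b) 0 \<in> {w. length w = a + b \<and> set w \<subseteq> {..<m}}" using m by auto
  then show "(\<lambda>w. mat_opnorm (mat_word_prod A w)) ` {w. length w = a + b \<and> set w \<subseteq> {..<m}} \<noteq> {}"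
    by blast
next
  fix y assume "y \<in> (\<lambda>w. mat_opnorm (mat_word_prod A w)) ` {w. length w = a + b \<and> set w \<subseteq> {..<m}}"
  then obtain w where w: "length w = a + b" "set w \<subseteq> {..<m}" "y = mat_opnorm (mat_word_prod A w)" by auto
  have "mat_word_prod A w = mat_word_prod A (take a w) ** mat_word_prod A (drop a w)"
    by (simp add: mat_word_prod_append[symmetric])
  then have "y \<le> mat_opnorm (mat_word_prod A (take a w)) * mat_opnorm (mat_word_prod A (drop a w))"
    using w mat_opnorm_mult by simp
  also have "\<dots> \<le> MA m A a * MA m A b"
    using w m set_take_subset[of a w] set_drop_subset[of a w]
    by (intro mult_mono MA_ge mat_opnorm_nonneg MA_nonneg) auto
  finally show "y \<le> MA m A a * MA m A b" .
qed

lemma jsr_mat_eq: assumes m: "m \<ge> 1" shows "jsr_mat m A = lim (\<lambda>n. root n (MA m A n))"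
proof -
  have "Max ((\<lambda>w. root n (mat_opnorm (mat_word_prod A w))) ` {w. length w = n \<and> set w \<subseteq> {..<m}}) = root n (MA m A n)" for n
  proof -
    have "replicate n 0 \<in> {w. length w = n \<and> set w \<subseteq> {..<m}}" using m by auto
    then have ne: "(\<lambda>w. mat_opnorm (mat_word_prod A w)) ` {w. length w = n \<and> set w \<subseteq> {..<m}} \<noteq> {}"
      by blast
    show ?thesis unfolding MA_def
      by (subst mono_Max_commute[OF mono_root finite_imageI[OF finA] ne]) (simp add: image_image)
  qed
  then show ?thesis unfolding jsr_mat_def by simp
qed

definition enc :: "nat \<Rightarrow> nat \<Rightarrow> bool list" where
  "enc m j = replicate j False @ [True] @ replicate (m - 1 - j) False"

lemma enc_act:
  assumes j: "j < m"
  shows "B_word_prod m A (enc m j) (sb (m-1) u) = sb (m-1) (A j *v u)"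
proof -
  have "B_word_prod m A (enc m j) = (B0 m ^^ j) \<circ> B1 m A \<circ> (B0 m ^^ (m - 1 - j))"
    by (simp add: enc_def Bw_append Bw_rep0 Bw_Cons Bw_Nil Bmap_def o_assoc)
  moreover have "(B0 m ^^ (m - 1 - j)) (sb (m-1) u) = sb j u"
    using j B0_pow_sb[of "m-1-j" "m-1" m u] by simp
  moreover have "B1 m A (sb j u) = sb (j + (m-1)) (A j *v u)" using j by (intro B1_sb) simp
  moreover have "(B0 m ^^ j) (sb (j + (m-1)) (A j *v u)) = sb (m-1) (A j *v u)"
    using j B0_pow_sb[of j "j + (m-1)" m "A j *v u"] by simp
  ultimately show ?thesis by simp
qed

lemma encw_act:
  assumes "set w \<subseteq> {..<m}"
  shows "B_word_prod m A (concat (map (enc m) w)) (sb (m-1) u) = sb (m-1) (mat_word_prod A w *v u)"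
  using assms
proof (induction w arbitrary: u)
  case Nil then show ?case by (simp add: Bw_Nil mat_word_prod_def)
next
  case (Cons j w)
  have "B_word_prod m A (concat (map (enc m) (j # w))) (sb (m-1) u)
      = B_word_prod m A (enc m j) (B_word_prod m A (concat (map (enc m) w)) (sb (m-1) u))"
    by (simp add: Bw_append)
  also have "\<dots> = B_word_prod m A (enc m j) (sb (m-1) (mat_word_prod A w *v u))" using Cons by simp
  also have "\<dots> = sb (m-1) (A j *v (mat_word_prod A w *v u))" using Cons by (intro enc_act) simp
  also have "\<dots> = sb (m-1) (mat_word_prod A (j # w) *v u)"
    by (simp add: mat_word_prod_def matrix_vector_mul_assoc)
  finally show ?case .
qed

lemma encw_len: "set w \<subseteq> {..<m} \<Longrightarrow> length (concat (map (enc m) w)) = m * length w"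
  by (induction w) (auto simp: enc_def)

lemma MA_le_MB: fixes A :: "nat \<Rightarrow> real^'d^'d" assumes m: "m \<ge> 1" shows "MA m A N \<le> MB m A (m * N)"
  unfolding MA_def
proof (rule Max.boundedI)
  show "finite ((\<lambda>w. mat_opnorm (mat_word_prod A w)) ` {w. length w = N \<and> set w \<subseteq> {..<m}})"
    by (intro finite_imageI finA)
  have "replicate N 0 \<in> {w. length w = N \<and> set w \<subseteq> {..<m}}" using m by auto
  then show "(\<lambda>w. mat_opnorm (mat_word_prod A w)) ` {w. length w = N \<and> set w \<subseteq> {..<m}} \<noteq> {}"
    by blast
next
  fix y assume "y \<in> (\<lambda>w. mat_opnorm (mat_word_prod A w)) ` {w. length w = N \<and> set w \<subseteq> {..<m}}"
  then obtain w where w: "length w = N" "set w \<subseteq> {..<m}" "y = mat_opnorm (mat_word_prod A w)" by auto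
  define W where "W = concat (map (enc m) w)"
  have "y \<le> Vopnorm m (B_word_prod m A W)"
    unfolding w(3) mat_opnorm_def
  proof (rule onorm_bound)
    show "0 \<le> Vopnorm m (B_word_prod m A W)" by (rule Vopnorm_nonneg[OF good_Bw])
    fix u :: "real^'d"
    have i: "m - 1 \<le> 2*m-2" using m by simp
    have e: "B_word_prod m A W (sb (m-1) u) = sb (m-1) (mat_word_prod A w *v u)"
      unfolding W_def by (rule encw_act[OF w(2)])
    have "norm (mat_word_prod A w *v u) = Vnorm m (B_word_prod m A W (sb (m-1) u))"
      using e Vnorm_sb[OF i, of "mat_word_prod A w *v u"] by simp
    also have "\<dots> \<le> Vopnorm m (B_word_prod m A W) * Vnorm m (sb (m-1) u)"
      by (rule Vopnorm_bound[OF good_Bw sb_Vsp[OF i]])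
    also have "\<dots> = Vopnorm m (B_word_prod m A W) * norm u"
    proof -
      have "Vnorm m (sb (m-1) u) = norm u" by (rule Vnorm_sb[OF i])
      then show ?thesis by simp
    qed
    finally show "norm (mat_word_prod A w *v u) \<le> Vopnorm m (B_word_prod m A W) * norm u" .
  qed
  also have "\<dots> \<le> MB m A (m * N)" using encw_len[OF w(2)] w(1) by (intro MB_ge) (simp add: W_def)
  finally show "y \<le> MB m A (m * N)" .
qed

lemma jsr_facts:
  fixes A :: "nat \<Rightarrow> real^'d^'d"
  assumes m: "m \<ge> 1" and pos: "jsr_mat m A > 0"
  shows "(\<lambda>n. root n (MB m A n)) \<longlonglongrightarrow> jsr_B m A" and "jsr_B m A > 0"
proof -
  have fB: "(\<lambda>n. root n (MB m A n)) \<longlonglongrightarrow> Inf ((\<lambda>n. root n (MB m A n)) ` {1..})"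
    by (rule fekete(1)) (auto simp: MB_nonneg MB_sub)
  then show conv: "(\<lambda>n. root n (MB m A n)) \<longlonglongrightarrow> jsr_B m A"
    unfolding jsr_B_eq by (simp add: limI)
  define LA where "LA = Inf ((\<lambda>n. root n (MA m A n)) ` {1..})"
  have fA: "(\<lambda>n. root n (MA m A n)) \<longlonglongrightarrow> LA"
    unfolding LA_def by (rule fekete(1)) (auto simp: MA_nonneg[OF m] MA_sub[OF m])
  have fA2: "LA \<le> root n (MA m A n)" if "n \<ge> 1" for n
    using that unfolding LA_def by (intro fekete(2)) (auto simp: MA_nonneg[OF m] MA_sub[OF m])
  have LA: "LA > 0" using pos jsr_mat_eq[OF m, of A] fA by (simp add: limI)
  have sm: "strict_mono (\<lambda>N. m * (N + 1))" using m by (intro strict_monoI) simp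
  have sub: "(\<lambda>N. root (m * (N+1)) (MB m A (m * (N+1)))) \<longlonglongrightarrow> jsr_B m A"
    using LIMSEQ_subseq_LIMSEQ[OF conv sm] by (simp add: o_def)
  have "root m LA \<le> jsr_B m A"
  proof (rule LIMSEQ_le_const[OF sub], intro exI allI impI)
    fix N :: nat
    have "root m LA \<le> root m (root (N+1) (MA m A (N+1)))"
      using m fA2[of "N+1"] by (intro real_root_le_mono) auto
    also have "\<dots> = root (m * (N+1)) (MA m A (N+1))" by (rule real_root_mult_exp[symmetric])
    also have "\<dots> \<le> root (m * (N+1)) (MB m A (m * (N+1)))"
      using m MA_le_MB[OF m, of A "N+1"] by (intro real_root_le_mono) auto
    finally show "root m LA \<le> root (m * (N+1)) (MB m A (m * (N+1)))" .
  qed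
  moreover have "root m LA > 0" using m LA by simp
  ultimately show "jsr_B m A > 0" by linarith
qed



fun pos :: "nat \<Rightarrow> (nat \<Rightarrow> bool) \<Rightarrow> nat \<Rightarrow> nat \<Rightarrow> nat" where
  "pos m x i 0 = i"
| "pos m x i (Suc n) = (if x n then pos m x i n + (m - 1) else pos m x i n - 1)"

lemma pos_hit:
  assumes v: "\<And>n. (x n \<longrightarrow> pos m x i n < m) \<and> (\<not> x n \<longrightarrow> pos m x i n \<ge> 1)"
  shows "\<exists>k. pos m x i k = m - 1"
proof -
  have ex: "\<exists>n. x n"
  proof (rule ccontr)
    assume "\<not> (\<exists>n. x n)"
    then have nx: "\<And>n. \<not> x n" by blast
    have "pos m x i n = i - n" for n by (induction n) (simp_all add: nx)
    then have "pos m x i i = 0" by simp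
    with v[of i] nx[of i] show False by simp
  qed
  then obtain n1 where n1: "x n1" by blast
  have step: "\<forall>a. pos m x i a = m - 1 + d \<longrightarrow> (\<exists>k. pos m x i k = m - 1)" for d
  proof (induction d)
    case 0 then show ?case by auto
  next
    case (Suc d)
    show ?case
    proof (intro allI impI)
      fix a assume a: "pos m x i a = m - 1 + Suc d"
      then have "\<not> x a" using v[of a] by auto
      then have "pos m x i (Suc a) = m - 1 + d" using a by simp
      then show "\<exists>k. pos m x i k = m - 1" using Suc by blast
    qed
  qed
  have "pos m x i (Suc n1) = m - 1 + pos m x i n1" using n1 by simp
  then show ?thesis using step by blast
qed

lemma seq_pos: "u \<in> Vsub m i \<Longrightarrow> seq_prod m A x n u \<in> Vsub m (pos m x i n)"
  by (induction n) (auto simp: Bmap_def intro: B0_Vsub[simplified] B1_Vsub[simplified])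

lemma decomp:
  fixes f :: "(nat \<Rightarrow> real^'d) \<Rightarrow> (nat \<Rightarrow> real^'d)"
  assumes g: "good m f" and v: "v \<in> Vsp m" and nz: "f v \<noteq> (\<lambda>_. 0)"
  shows "\<exists>i\<le>2*m-2. \<exists>u\<in>Vsub m i. f u \<noteq> (\<lambda>_. 0)"
proof (rule ccontr)
  assume "\<not> ?thesis"
  then have z: "\<And>i u. i \<le> 2*m-2 \<Longrightarrow> u \<in> Vsub m i \<Longrightarrow> f u = (\<lambda>_. 0)" by blast
  have Q: "\<forall>v\<in>Vsp m. (\<forall>j\<ge>t. v j = 0) \<longrightarrow> f v = (\<lambda>_. 0)" for t
  proof (induction t)
    case 0
    show ?case
    proof (intro ballI impI)
      fix v :: "nat \<Rightarrow> real^'d" assume "v \<in> Vsp m" "\<forall>j\<ge>0. v j = 0"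
      then have "v = (\<lambda>_. 0)" by auto
      then show "f v = (\<lambda>_. 0)" using good_zero[OF g] by simp
    qed
  next
    case (Suc t)
    show ?case
    proof (intro ballI impI)
      fix v :: "nat \<Rightarrow> real^'d" assume v: "v \<in> Vsp m" and vz: "\<forall>j\<ge>Suc t. v j = 0"
      define v' where "v' = (\<lambda>i. if i = t then 0 else v i)"
      have v'V: "v' \<in> Vsp m" using v by (auto simp: v'_def Vsp_def)
      have "f v' = (\<lambda>_. 0)" using Suc v'V vz by (auto simp: v'_def)
      moreover have "f (sb t (v t)) = (\<lambda>_. 0)"
      proof (cases "t \<le> 2*m-2")
        case True then show ?thesis using z sb_Vsub by blast
      next
        case False
        then have "v t = 0" using v by (auto simp: Vsp_def)
        then have "sb t (v t) = (\<lambda>_. 0)" by (auto simp: sb_def)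
        then show ?thesis using good_zero[OF g] by simp
      qed
      moreover have sbV: "sb t (v t) \<in> Vsp m" using v by (auto simp: sb_def Vsp_def)
      moreover have "v = (\<lambda>i. v' i + sb t (v t) i)" by (auto simp: v'_def sb_def)
      ultimately show "f v = (\<lambda>_. 0)" using good_add[OF g v'V sbV] by simp
    qed
  qed
  have "\<forall>j\<ge>Suc (2*m-2). v j = 0" using v by (auto simp: Vsp_def)
  then have "f v = (\<lambda>_. 0)" using Q v by blast
  with nz show False by simp
qed



theorem lemma6:
  fixes m :: nat and A :: "nat \<Rightarrow> real^'d^'d" and x :: "nat \<Rightarrow> bool"
  assumes "m \<ge> 1"
    and "jsr_mat m A > 0"
    and "very_weakly_extremal_B m A x"
  shows "\<exists>k::nat. very_weakly_extremal_B m A (shiftk k x) \<and>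
           (\<forall>n\<ge>1. seq_prod m A (shiftk k x) n ` Vsub m (m - 1) \<noteq> {(\<lambda>_. 0)})"
proof -
  note m = assms(1)
  define L where "L = jsr_B m A"
  have conv: "(\<lambda>n. root n (MB m A n)) \<longlonglongrightarrow> L" and Lpos: "L > 0"
    using jsr_facts[OF m assms(2)] by (auto simp: L_def)
  define P where "P = seq_prod m A x"
  have hyp: "limsup (\<lambda>n. ereal (root n (Vopnorm m (P n)))) = ereal L"
    using assms(3) by (simp add: very_weakly_extremal_B_def P_def L_def)
  have Ppos: "Vopnorm m (P n) > 0" for n
  proof (rule ccontr)
    assume "\<not> Vopnorm m (P n) > 0"
    then have P0: "Vopnorm m (P n) = 0" using Vopnorm_nonneg[OF good_seq[of m A x n]] by (simp add: P_def)
    have "\<forall>\<^sub>F j in sequentially. ereal (root j (Vopnorm m (P j))) \<le> 0"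
      unfolding eventually_sequentially
    proof (intro exI allI impI)
      fix j assume "n \<le> j"
      then have "P j = seq_prod m A (shiftk n x) (j - n) \<circ> P n"
        using seq_shift[of m A x "j - n" n] by (simp add: P_def)
      then have "Vopnorm m (P j) \<le> Vopnorm m (seq_prod m A (shiftk n x) (j - n)) * Vopnorm m (P n)"
        using Vopnorm_comp[OF good_seq[of m A x n] good_seq[of m A "shiftk n x" "j-n"]] by (simp add: P_def)
      then have "Vopnorm m (P j) = 0" using P0 Vopnorm_nonneg[OF good_seq[of m A x j]] by (simp add: P_def)
      then show "ereal (root j (Vopnorm m (P j))) \<le> 0" by simp
    qed
    then have "limsup (\<lambda>j. ereal (root j (Vopnorm m (P j)))) \<le> 0" by (rule Limsup_bounded)
    with hyp Lpos show False by simp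
  qed
  have alive: "\<exists>i\<le>2*m-2. \<exists>u\<in>Vsub m i. P n u \<noteq> (\<lambda>_. 0)" for n
  proof -
    have "\<exists>v\<in>Vsp m. P n v \<noteq> (\<lambda>_. 0)"
    proof (rule ccontr)
      assume "\<not> ?thesis"
      then have "\<And>v. v \<in> Vsp m \<Longrightarrow> P n v = (\<lambda>_. 0)" by blast
      then have "Vopnorm m (P n) \<le> 0"
        by (intro Vopnorm_least) (auto simp: P_def good_seq Vnorm_zero)
      with Ppos[of n] show False by simp
    qed
    then obtain v where "v \<in> Vsp m" "P n v \<noteq> (\<lambda>_. 0)" by blast
    then show ?thesis unfolding P_def by (intro decomp[OF good_seq]) auto
  qed
  define S where "S n = {i. i \<le> 2*m-2 \<and> (\<exists>u\<in>Vsub m i. P n u \<noteq> (\<lambda>_. 0))}" for n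
  have Smono: "S n' \<subseteq> S n" if "n \<le> n'" for n n'
  proof
    fix i assume "i \<in> S n'"
    then obtain u where u: "i \<le> 2*m-2" "u \<in> Vsub m i" "P n' u \<noteq> (\<lambda>_. 0)" by (auto simp: S_def)
    have "P n' = seq_prod m A (shiftk n x) (n' - n) \<circ> P n"
      using seq_shift[of m A x "n' - n" n] that by (simp add: P_def)
    then have "P n u \<noteq> (\<lambda>_. 0)" using u good_zero[OF good_seq[of m A "shiftk n x" "n'-n"]] by auto
    then show "i \<in> S n" using u by (auto simp: S_def)
  qed
  obtain i0 where i0: "\<And>n. \<exists>u\<in>Vsub m i0. P n u \<noteq> (\<lambda>_. 0)"
  proof -
    have "\<exists>i. \<forall>n. i \<in> S n"
    proof (rule ccontr)
      assume "\<not> ?thesis"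
      then have "\<forall>i. \<exists>n. i \<notin> S n" by blast
      then obtain g where g: "\<And>i. i \<notin> S (g i)" by metis
      define N where "N = (\<Sum>i\<le>2*m-2. g i)"
      have "S N = {}"
      proof (rule ccontr)
        assume "S N \<noteq> {}"
        then obtain i where i: "i \<in> S N" by blast
        then have "i \<le> 2*m-2" by (simp add: S_def)
        then have "g i \<le> N" unfolding N_def by (intro member_le_sum) auto
        then have "i \<in> S (g i)" using Smono i by blast
        with g show False by blast
      qed
      moreover have "S N \<noteq> {}" using alive[of N] by (auto simp: S_def)
      ultimately show False by blast
    qed
    then obtain i where "\<forall>n. i \<in> S n" by blast
    then show ?thesis using that by (auto simp: S_def)
  qed
  have valid: "(x n \<longrightarrow> pos m x i0 n < m) \<and> (\<not> x n \<longrightarrow> pos m x i0 n \<ge> 1)" for n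
  proof -
    obtain u where u: "u \<in> Vsub m i0" "P (Suc n) u \<noteq> (\<lambda>_. 0)" using i0 by blast
    have w: "P n u \<in> Vsub m (pos m x i0 n)" using seq_pos[OF u(1)] by (simp add: P_def)
    have e: "P (Suc n) u = Bmap m A (x n) (P n u)" by (simp add: P_def)
    show ?thesis
    proof (intro conjI impI)
      assume xn: "x n"
      show "pos m x i0 n < m"
      proof (rule ccontr)
        assume "\<not> pos m x i0 n < m"
        then have "B1 m A (P n u) = (\<lambda>_. 0)" using B1_big[OF m w] by simp
        then show False using u e xn by (simp add: Bmap_def)
      qed
    next
      assume xn: "\<not> x n"
      show "pos m x i0 n \<ge> 1"
      proof (rule ccontr)
        assume "\<not> pos m x i0 n \<ge> 1"
        then have "pos m x i0 n = 0" by simp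
        then have "B0 m (P n u) = (\<lambda>_. 0)" using B0_V0 w by simp
        then show False using u e xn by (simp add: Bmap_def)
      qed
    qed
  qed
  obtain k where k: "pos m x i0 k = m - 1" using pos_hit[OF valid] by blast
  define y where "y = shiftk k x"
  define Q where "Q = seq_prod m A y"
  have PQ: "P (n + k) = Q n \<circ> P k" for n
    using seq_shift[of m A x n k] by (simp add: P_def Q_def y_def)
  have part1: "seq_prod m A y n ` Vsub m (m - 1) \<noteq> {(\<lambda>_. 0)}" for n
  proof
    assume h: "seq_prod m A y n ` Vsub m (m - 1) = {(\<lambda>_. 0)}"
    obtain u where u: "u \<in> Vsub m i0" "P (n + k) u \<noteq> (\<lambda>_. 0)" using i0 by blast
    have "P k u \<in> Vsub m (m - 1)" using seq_pos[OF u(1), of A x k] k by (simp add: P_def)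
    then have "Q n (P k u) = (\<lambda>_. 0)" using h by (auto simp: Q_def)
    with u PQ[of n] show False by simp
  qed
  have Qpos_le: "Vopnorm m (P (n + k)) \<le> Vopnorm m (Q n) * Vopnorm m (P k)" for n
    using Vopnorm_comp[OF good_seq[of m A x k] good_seq[of m A y n]] PQ[of n] by (simp add: P_def Q_def)
  have up: "limsup (\<lambda>n. ereal (root n (Vopnorm m (Q n)))) \<le> ereal L"
  proof -
    have "limsup (\<lambda>n. ereal (root n (Vopnorm m (Q n)))) \<le> limsup (\<lambda>n. ereal (root n (MB m A n)))"
    proof (rule Limsup_mono, rule always_eventually, rule allI)
      fix n
      have "Vopnorm m (Q n) \<le> MB m A n" unfolding Q_def seq_Bw by (rule MB_ge) simp
      then have "root n (Vopnorm m (Q n)) \<le> root n (MB m A n)"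
        by (cases "n = 0") (auto intro: real_root_le_mono)
      then show "ereal (root n (Vopnorm m (Q n))) \<le> ereal (root n (MB m A n))" by simp
    qed
    also have "\<dots> = ereal L"
      by (rule lim_imp_Limsup) (auto intro: tendsto_ereal conv)
    finally show ?thesis .
  qed
  have low: "ereal L \<le> limsup (\<lambda>n. ereal (root n (Vopnorm m (Q n))))"
  proof (rule ccontr)
    assume "\<not> ?thesis"
    then have lt: "limsup (\<lambda>n. ereal (root n (Vopnorm m (Q n)))) < ereal L" by simp
    obtain t where t1: "limsup (\<lambda>n. ereal (root n (Vopnorm m (Q n)))) < ereal t" and t2': "ereal t < ereal L"
      using ereal_dense2[OF lt] by blast
    have t2: "t < L" using t2' by simp
    have "0 \<le> limsup (\<lambda>n. ereal (root n (Vopnorm m (Q n))))"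
      by (rule le_Limsup) (auto intro!: always_eventually real_root_ge_zero Vopnorm_nonneg simp: Q_def good_seq)
    then have "0 < ereal t" using t1 by (rule order.strict_trans1)
    then have t0: "t > 0" by simp
    have "\<forall>\<^sub>F n in sequentially. ereal (root n (Vopnorm m (Q n))) < ereal t"
      using Limsup_lessD[OF t1] .
    then obtain N0 where N0: "\<And>n. n \<ge> N0 \<Longrightarrow> root n (Vopnorm m (Q n)) < t"
      unfolding eventually_sequentially by auto
    have Qb: "Vopnorm m (Q n) \<le> t ^ n" if "n \<ge> N0" "n \<ge> 1" for n
    proof -
      have q0: "0 \<le> Vopnorm m (Q n)" by (simp add: Q_def Vopnorm_nonneg good_seq)
      have "Vopnorm m (Q n) = root n (Vopnorm m (Q n)) ^ n" using that q0 by (simp add: real_root_pow_pos2)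
      also have "\<dots> \<le> t ^ n" using N0[OF that(1)] q0 by (intro power_mono) (auto intro: real_root_ge_zero)
      finally show ?thesis .
    qed
    define c where "c = Vopnorm m (P k)"
    have c0: "0 \<le> c" by (simp add: c_def P_def Vopnorm_nonneg good_seq)
    define K where "K = (c + 1) / t ^ k"
    have K0: "K > 0" using c0 t0 by (simp add: K_def)
    define s where "s = (t + L) / 2"
    have s: "t < s" "s < L" using t2 by (auto simp: s_def)
    have "(\<lambda>j. root j K) \<longlonglongrightarrow> 1" by (rule LIMSEQ_root_const[OF K0])
    moreover have "1 < s / t" using s t0 by simp
    ultimately have evK: "\<forall>\<^sub>F j in sequentially. root j K < s / t" by (rule order_tendstoD)
    have "\<forall>\<^sub>F j in sequentially. ereal (root j (Vopnorm m (P j))) \<le> ereal s"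
      using evK eventually_ge_at_top[of "N0 + k + 1"]
    proof eventually_elim
      case (elim j)
      define n where "n = j - k"
      have n: "n \<ge> N0" "n \<ge> 1" "j = n + k" using elim by (auto simp: n_def)
      have "Vopnorm m (P j) \<le> Vopnorm m (Q n) * c" using Qpos_le[of n] n by (simp add: c_def)
      also have "\<dots> \<le> t ^ n * (c + 1)" using Qb[OF n(1,2)] c0 t0
        by (intro mult_mono) (auto simp: Q_def Vopnorm_nonneg good_seq)
      also have "\<dots> = t ^ j * K" using t0 n(3) by (simp add: K_def power_add field_simps)
      finally have Pj: "Vopnorm m (P j) \<le> t ^ j * K" .
      have j1: "j \<ge> 1" using n by simp
      have "root j (Vopnorm m (P j)) \<le> root j (t ^ j * K)" using Pj j1 by (intro real_root_le_mono) auto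
      also have "\<dots> = t * root j K" using j1 t0 K0 by (simp add: real_root_mult real_root_power_cancel)
      also have "\<dots> < s" using elim t0 by (simp add: field_simps)
      finally show ?case by simp
    qed
    then have "limsup (\<lambda>j. ereal (root j (Vopnorm m (P j)))) \<le> ereal s" by (rule Limsup_bounded)
    with hyp s show False by simp
  qed
  have "very_weakly_extremal_B m A y"
    unfolding very_weakly_extremal_B_def using up low by (simp add: Q_def L_def)
  then show ?thesis using part1 by (auto simp: y_def)
qed

end
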